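(* Let $O\colon[0,1]^2\to[0,1]$ be a commutative binary function that is non-decreasing in each variable. If $x,y,z\in[0,1]$ satisfy $O(x,y)\in\{x,y\}$, $O(x,z)\in\{x,z\}$ and $O(y,z)\in\{y,z\}$, then $O(O(x,y),z)=O(O(y,z),x)=O(O(x,z),y)$. *)

theory Defs
  imports Complex_Main
begin

end

theory Submission
  imports Defs
begin

theorem corollary1:
  fixes Op :: "real \<Rightarrow> real \<Rightarrow> real" and x y z :: real
  assumes range: "\<And>a b. a \<in> {0..1} \<Longrightarrow> b \<in> {0..1} \<Longrightarrow> Op a b \<in> {0..1}"
    and comm: "\<And>a b. a \<in> {0..1} \<Longrightarrow> b \<in> {0..1} \<Longrightarrow> Op a b = Op b a"
    and mono: "\<And>a a' b. a \<in> {0..1} \<Longrightarrow> a' \<in> {0..1} \<Longrightarrow> b \<in> {0..1} \<Longrightarrow> a \<le> a' \<Longrightarrow> Op a b \<le> Op a' b"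
    and mono2: "\<And>a b b'. a \<in> {0..1} \<Longrightarrow> b \<in> {0..1} \<Longrightarrow> b' \<in> {0..1} \<Longrightarrow> b \<le> b' \<Longrightarrow> Op a b \<le> Op a b'"
    and xyz: "x \<in> {0..1}" "y \<in> {0..1}" "z \<in> {0..1}"
    and hxy: "Op x y \<in> {x, y}"
    and hxz: "Op x z \<in> {x, z}"
    and hyz: "Op y z \<in> {y, z}"
  shows "Op (Op x y) z = Op (Op y z) x \<and> Op (Op y z) x = Op (Op x z) y"
proof -
  have c1: "Op y x = Op x y" "Op z x = Op x z" "Op z y = Op y z" using comm xyz by auto
  have m: "\<And>a a' b. a \<in> {x,y,z} \<Longrightarrow> a' \<in> {x,y,z} \<Longrightarrow> b \<in> {x,y,z} \<Longrightarrow> a \<le> a' \<Longrightarrow> Op a b \<le> Op a' b"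
    using mono xyz by blast
  have m2: "\<And>a a' b. a \<in> {x,y,z} \<Longrightarrow> a' \<in> {x,y,z} \<Longrightarrow> b \<in> {x,y,z} \<Longrightarrow> a \<le> a' \<Longrightarrow> Op b a \<le> Op b a'"
    using mono2 xyz by blast
  have "x \<le> y \<or> y \<le> x" "x \<le> z \<or> z \<le> x" "y \<le> z \<or> z \<le> y" by auto
  then show ?thesis using hxy hxz hyz c1
    m[of x y z] m[of y x z] m[of x z y] m[of z x y] m[of y z x] m[of z y x]
    m2[of x y z] m2[of y x z] m2[of x z y] m2[of z x y] m2[of y z x] m2[of z y x]
    by auto
qed

end
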